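(* Let $\varphi(s,v)=\vec c(s)+v\vec q(s)$ be a timelike ruled surface in $\mathbb{R}^3_1$ of type $M^1_-$ or $M^1_+$, and let $\varphi^*(s,v)=\vec c(s)+R(s)\vec a(s)+v\vec q^*(s)$ be a Mannheim offset of $\varphi$. Then $\varphi$ is developable if and only if $R$ is constant.
   Context: Work in Minkowski 3-space $\mathbb{R}^3_1$, i.e. $\mathbb{R}^3$ with $\langle x,y\rangle=-x_1y_1+x_2y_2+x_3y_3$, norm $\|x\|=\sqrt{|\langle x,x\rangle|}$, and Lorentzian cross product $x\times y=(x_2y_3-x_3y_2,\,x_1y_3-x_3y_1,\,x_2y_1-x_1y_2)$. A ruled surface is $\varphi(s,v)=\vec c(s)+v\vec q(s)$, where $\vec q$ is a unit non-null vector field with $\langle\vec q,\vec q\rangle=\varepsilon_2\in\{\pm1\}$, $d\vec q/ds$ is non-null, and the base curve $\vec c$ is the striction curve, i.e. $\langle d\vec q/ds,d\vec c/ds\rangle=0$; $s$ is the arc-length parameter of $\vec c$. Its Frenet frame is $\{\vec q,\vec h,\vec a\}$ with central normal $\vec h=\frac{d\vec q/ds}{\|d\vec q/ds\|}$ and asymptotic normal $\vec a=\frac{(d\vec q/ds)\times\vec q}{\|d\vec q/ds\|}$ (all assumed non-null). The surface is of type $M^1_-$ if $\vec q$ is timelike and $\vec h$ spacelike; of type $M^1_+$ if $\vec q$ and $\vec h$ are both spacelike (these two types are timelike surfaces); of type $M^2_+$ if $\vec h$ is timelike and $\vec q$, $d\vec q/ds$ are spacelike (a spacelike surface). The distribution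 parameter is $d_\varphi=\det(d\vec c/ds,\vec q,d\vec q/ds)/\langle d\vec q/ds,d\vec q/ds\rangle$, and $\varphi$ is called developable iff $d_\varphi\equiv 0$. A ruled surface $\varphi^*(s,v)=\vec c^*(s)+v\vec q^*(s)$, with striction curve $\vec c^*$ and Frenet frame $\{\vec q^*,\vec h^*,\vec a^*\}$ defined in the same way, is a Mannheim offset of the timelike ruled surface $\varphi$ if there is a one-to-one correspondence between their rulings such that $\vec h^*=\vec a$ (the asymptotic normal of $\varphi$ is the central normal of $\varphi^*$); in this case $\vec c^*(s)=\vec c(s)+R(s)\vec a(s)$ for a scalar function $R$. *)

theory Defs
  imports "HOL-Analysis.Analysis"
begin

definition linner :: "real^3 \<Rightarrow> real^3 \<Rightarrow> real" where
  "linner x y = - x$1 * y$1 + x$2 * y$2 + x$3 * y$3"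

definition lnorm :: "real^3 \<Rightarrow> real" where
  "lnorm x = sqrt \<bar>linner x x\<bar>"

definition lcross :: "real^3 \<Rightarrow> real^3 \<Rightarrow> real^3" where
  "lcross x y = vector [x$2 * y$3 - x$3 * y$2, x$1 * y$3 - x$3 * y$1, x$2 * y$1 - x$1 * y$2]"

definition spacelike :: "real^3 \<Rightarrow> bool" where
  "spacelike x \<longleftrightarrow> linner x x > 0"

definition timelike :: "real^3 \<Rightarrow> bool" where
  "timelike x \<longleftrightarrow> linner x x < 0"

definition non_null :: "real^3 \<Rightarrow> bool" where
  "non_null x \<longleftrightarrow> linner x x \<noteq> 0"

definition det3 :: "real^3 \<Rightarrow> real^3 \<Rightarrow> real^3 \<Rightarrow> real" where
  "det3 x y z = det (vector [x, y, z] :: real^3^3)"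

definition ruled_surface :: "(real \<Rightarrow> real^3) \<Rightarrow> (real \<Rightarrow> real^3) \<Rightarrow> real \<times> real \<Rightarrow> real^3" where
  "ruled_surface c q = (\<lambda>(s, v). c s + v *\<^sub>R q s)"

abbreviation dds :: "(real \<Rightarrow> real^3) \<Rightarrow> real \<Rightarrow> real^3" where
  "dds f s \<equiv> vector_derivative f (at s)"

definition central_normal :: "(real \<Rightarrow> real^3) \<Rightarrow> real \<Rightarrow> real^3" where
  "central_normal q s = (1 / lnorm (dds q s)) *\<^sub>R dds q s"

definition asymptotic_normal :: "(real \<Rightarrow> real^3) \<Rightarrow> real \<Rightarrow> real^3" where
  "asymptotic_normal q s = (1 / lnorm (dds q s)) *\<^sub>R lcross (dds q s) (q s)"

definition distribution_parameter :: "(real \<Rightarrow> real^3) \<Rightarrow> (real \<Rightarrow> real^3) \<Rightarrow> real \<Rightarrow> real" where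
  "distribution_parameter c q s = det3 (dds c s) (q s) (dds q s) / linner (dds q s) (dds q s)"

definition developable :: "real set \<Rightarrow> (real \<Rightarrow> real^3) \<Rightarrow> (real \<Rightarrow> real^3) \<Rightarrow> bool" where
  "developable I c q \<longleftrightarrow> (\<forall>s\<in>I. distribution_parameter c q s = 0)"

text \<open>A ruled surface \<open>c + v q\<close> over the parameter set \<open>I\<close> whose base curve \<open>c\<close> is the
  striction curve, with \<open>q\<close> a unit non-null ruling field, \<open>dq/ds\<close> non-null and non-null
  Frenet frame (arc length is not part of this predicate).\<close>
definition striction_ruled :: "real set \<Rightarrow> (real \<Rightarrow> real^3) \<Rightarrow> (real \<Rightarrow> real^3) \<Rightarrow> bool" where
  "striction_ruled I c q \<longleftrightarrow>
     (\<exists>\<epsilon>\<in>{1, -1}. \<forall>s\<in>I. linner (q s) (q s) = \<epsilon>) \<and>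
     (\<forall>s\<in>I. c differentiable (at s) \<and> q differentiable (at s) \<and>
        non_null (dds q s) \<and>
        linner (dds q s) (dds c s) = 0 \<and>
        non_null (central_normal q s) \<and> non_null (asymptotic_normal q s))"

definition base_ruled_surface :: "real set \<Rightarrow> (real \<Rightarrow> real^3) \<Rightarrow> (real \<Rightarrow> real^3) \<Rightarrow> bool" where
  "base_ruled_surface I c q \<longleftrightarrow> striction_ruled I c q \<and>
     (\<forall>s\<in>I. lnorm (dds c s) = 1 \<and> (\<lambda>t. dds q t) differentiable (at s))"

definition type_M1_minus :: "real set \<Rightarrow> (real \<Rightarrow> real^3) \<Rightarrow> bool" where
  "type_M1_minus I q \<longleftrightarrow> (\<forall>s\<in>I. timelike (q s) \<and> spacelike (central_normal q s))"

definition type_M1_plus :: "real set \<Rightarrow> (real \<Rightarrow> real^3) \<Rightarrow> bool" where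
  "type_M1_plus I q \<longleftrightarrow> (\<forall>s\<in>I. spacelike (q s) \<and> spacelike (central_normal q s))"

text \<open>\<open>\<phi>*(s,v) = c(s) + R(s) a(s) + v q*(s)\<close> is a Mannheim offset of \<open>\<phi> = c + v q\<close>:
  its base curve \<open>c* = c + R a\<close> is its striction curve and \<open>h* = a\<close>.\<close>
definition mannheim_offset :: "real set \<Rightarrow> (real \<Rightarrow> real^3) \<Rightarrow> (real \<Rightarrow> real^3) \<Rightarrow>
    (real \<Rightarrow> real) \<Rightarrow> (real \<Rightarrow> real^3) \<Rightarrow> bool" where
  "mannheim_offset I c q R qs \<longleftrightarrow>
     striction_ruled I (\<lambda>s. c s + R s *\<^sub>R asymptotic_normal q s) qs \<and>
     (\<forall>s\<in>I. central_normal qs s = asymptotic_normal q s)"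

end

theory Submission
  imports Defs
begin

lemma bb_linner: "bounded_bilinear linner"
  unfolding bilinear_conv_bounded_bilinear[symmetric] bilinear_def linear_iff
  by (auto simp: linner_def algebra_simps)
lemma bb_lcross: "bounded_bilinear lcross"
  unfolding bilinear_conv_bounded_bilinear[symmetric] bilinear_def linear_iff
  by (auto simp: lcross_def vec_eq_iff vector_def forall_3 algebra_simps)
lemma det3_lcross: "det3 x y z = linner x (lcross z y)"
  by (simp add: det3_def det_3 linner_def lcross_def vector_def algebra_simps)
lemma lcross_norm: "linner (lcross x y) (lcross x y) = (linner x y)^2 - linner x x * linner y y"
  by (simp add: linner_def lcross_def vector_def power2_eq_square algebra_simps)
lemma linner_sym: "linner x y = linner y x" by (simp add: linner_def algebra_simps)
lemma linner_scale: "linner (a *\<^sub>R x) y = a * linner x y" "linner x (a *\<^sub>R y) = a * linner x y"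
  by (simp_all add: linner_def algebra_simps)
lemma linner_add: "linner (x + y) z = linner x z + linner y z" "linner z (x + y) = linner z x + linner z y"
  by (simp_all add: linner_def algebra_simps)

lemma sqrt_aux: "(g::real) > 0 \<Longrightarrow> sqrt g * x / g = x / sqrt g"
proof -
  assume g: "g > 0"
  then have "sqrt g * sqrt g = g" by simp
  then show ?thesis using g by (metis nonzero_mult_div_cancel_left times_divide_eq_left mult.commute real_sqrt_gt_0_iff less_irrefl divide_divide_eq_left)
qed

lemma const_deriv0:
  fixes f :: "real \<Rightarrow> 'a::real_normed_vector"
  assumes "open I" "s \<in> I" "\<And>t. t \<in> I \<Longrightarrow> f t = k" "(f has_vector_derivative f') (at s)"
  shows "f' = 0"
proof -
  have "(f has_vector_derivative 0) (at s)"
    by (rule has_vector_derivative_transform_within_open[of "\<lambda>t. k" _ _ I]) (use assms in auto)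
  then show ?thesis using assms(4) vector_derivative_unique_at by blast
qed

lemma linner_deriv:
  assumes "(f has_vector_derivative f') (at s)" "(g has_vector_derivative g') (at s)"
  shows "((\<lambda>t. linner (f t) (g t)) has_vector_derivative (linner (f s) g' + linner f' (g s))) (at s)"
  using bounded_bilinear.has_vector_derivative[OF bb_linner assms] .

lemma pointwise:
  fixes I :: "real set" and c q qs :: "real \<Rightarrow> real^3" and R :: "real \<Rightarrow> real"
  assumes I: "open I" and s: "s \<in> I"
    and eps: "\<forall>t\<in>I. linner (q t) (q t) = \<epsilon>" and e1: "\<epsilon> \<in> {1, -1}"
    and sr: "striction_ruled I c q"
    and br: "\<forall>t\<in>I. (\<lambda>t. dds q t) differentiable (at t)"
    and sp: "\<forall>t\<in>I. spacelike (central_normal q t)"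
    and Rd: "(R has_real_derivative R') (at s)"
    and mo: "mannheim_offset I c q R qs"
  shows "distribution_parameter c q s = 0 \<longleftrightarrow> R' = 0"
proof -
  define Q where "Q = (\<lambda>t. dds q t)"
  define a where "a = asymptotic_normal q"
  have qdt: "(q has_vector_derivative Q t) (at t)" if "t \<in> I" for t
    using sr that unfolding striction_ruled_def Q_def by (auto simp: vector_derivative_works[symmetric])
  have qd: "(q has_vector_derivative Q s) (at s)" using qdt[OF s] .
  have cd: "(c has_vector_derivative dds c s) (at s)"
    using sr s unfolding striction_ruled_def by (auto simp: vector_derivative_works[symmetric])
  obtain Q2 where Qd: "(Q has_vector_derivative Q2) (at s)"
    using br s unfolding Q_def by (auto simp: vector_derivative_works)
  have QQpos: "linner (Q t) (Q t) > 0" if "t \<in> I" for t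
  proof -
    have "linner (central_normal q t) (central_normal q t) > 0"
      using sp that by (simp add: spacelike_def)
    then have "(1 / lnorm (Q t))^2 * linner (Q t) (Q t) > 0"
      unfolding central_normal_def Q_def by (simp add: linner_scale power2_eq_square)
    then show ?thesis by (simp add: zero_less_mult_iff)
  qed
  have lnQ: "lnorm (Q t) = sqrt (linner (Q t) (Q t))" if "t \<in> I" for t
    using QQpos[OF that] by (simp add: lnorm_def)
  have qQt: "linner (q t) (Q t) = 0" if t: "t \<in> I" for t
  proof -
    have "linner (q t) (Q t) + linner (Q t) (q t) = 0"
      by (rule const_deriv0[OF I t _ linner_deriv[OF qdt[OF t] qdt[OF t]]]) (use eps in auto)
    then show ?thesis by (simp add: linner_sym)
  qed
  have qQ: "linner (q s) (Q s) = 0" using qQt[OF s] .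
  have aeq: "a t = (1 / sqrt (linner (Q t) (Q t))) *\<^sub>R lcross (Q t) (q t)" if "t \<in> I" for t
    using lnQ[OF that] by (simp add: a_def asymptotic_normal_def Q_def)
  have ad: "\<exists>A. ((\<lambda>t. (1 / sqrt (linner (Q t) (Q t))) *\<^sub>R lcross (Q t) (q t)) has_vector_derivative A) (at s)"
  proof -
    have g: "((\<lambda>t. linner (Q t) (Q t)) has_real_derivative (linner (Q s) Q2 + linner Q2 (Q s))) (at s)"
      using linner_deriv[OF Qd Qd] by (simp add: has_real_derivative_iff_has_vector_derivative)
    have l: "((\<lambda>t. lcross (Q t) (q t)) has_vector_derivative (lcross (Q s) (Q s) + lcross Q2 (q s))) (at s)"
      using bounded_bilinear.has_vector_derivative[OF bb_lcross Qd qd] .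
    show ?thesis using g QQpos[OF s] l
      by (auto intro!: derivative_eq_intros)
  qed
  then obtain A where A0: "((\<lambda>t. (1 / sqrt (linner (Q t) (Q t))) *\<^sub>R lcross (Q t) (q t)) has_vector_derivative A) (at s)"
    by blast
  have Ad: "(a has_vector_derivative A) (at s)"
    by (rule has_vector_derivative_transform_within_open[OF A0 I s]) (simp add: aeq)
  have aa: "linner (a t) (a t) = - \<epsilon>" if "t \<in> I" for t
  proof -
    have "linner (a t) (a t) = (1 / sqrt (linner (Q t) (Q t)))^2 * linner (lcross (Q t) (q t)) (lcross (Q t) (q t))"
      using aeq[OF that] by (simp add: linner_scale power2_eq_square)
    also have "\<dots> = - \<epsilon>"
      using QQpos[OF that] qQt[OF that] eps that
      by (simp add: lcross_norm linner_sym power_divide)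
    finally show ?thesis .
  qed
  have aA: "linner (a s) A = 0"
  proof -
    have "linner (a s) A + linner A (a s) = 0"
      by (rule const_deriv0[OF I s _ linner_deriv[OF Ad Ad]]) (use aa in auto)
    then show ?thesis by (simp add: linner_sym)
  qed
  define C where "C = dds c s"
  have csd: "((\<lambda>t. c t + R t *\<^sub>R a t) has_vector_derivative (C + (R s *\<^sub>R A + R' *\<^sub>R a s))) (at s)"
    using cd Rd Ad unfolding C_def by (auto intro!: derivative_eq_intros)
  have dcs: "dds (\<lambda>t. c t + R t *\<^sub>R a t) s = C + (R s *\<^sub>R A + R' *\<^sub>R a s)"
    using csd by (rule vector_derivative_at)
  have off1: "linner (dds qs s) (dds (\<lambda>t. c t + R t *\<^sub>R a t) s) = 0"
    and off2: "non_null (dds qs s)" and off3: "central_normal qs s = a s"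
    using mo s unfolding mannheim_offset_def striction_ruled_def a_def by auto
  have lqs: "lnorm (dds qs s) \<noteq> 0" using off2 by (simp add: lnorm_def non_null_def)
  have qseq: "dds qs s = lnorm (dds qs s) *\<^sub>R a s"
  proof -
    have "(1 / lnorm (dds qs s)) *\<^sub>R dds qs s = a s" using off3 by (simp add: central_normal_def)
    then have "lnorm (dds qs s) *\<^sub>R ((1 / lnorm (dds qs s)) *\<^sub>R dds qs s) = lnorm (dds qs s) *\<^sub>R a s" by simp
    then show ?thesis using lqs by simp
  qed
  have "linner (dds qs s) (C + (R s *\<^sub>R A + R' *\<^sub>R a s)) = 0"
    using off1 dcs by simp
  moreover obtain k where "dds qs s = k *\<^sub>R a s" "k \<noteq> 0" using qseq lqs by blast
  ultimately have "linner (a s) (C + (R s *\<^sub>R A + R' *\<^sub>R a s)) = 0"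
    by (simp add: linner_scale)
  then have "linner (a s) C + R' * linner (a s) (a s) + R s * linner (a s) A = 0"
    by (simp add: linner_add linner_scale)
  then have key: "linner C (a s) = \<epsilon> * R'"
    using aA aa[OF s] by (simp add: linner_sym[of C])
  have dp: "distribution_parameter c q s = linner C (a s) / sqrt (linner (Q s) (Q s))"
  proof -
    have "distribution_parameter c q s = linner C (lcross (Q s) (q s)) / linner (Q s) (Q s)"
      by (simp add: distribution_parameter_def det3_lcross C_def Q_def)
    also have "lcross (Q s) (q s) = sqrt (linner (Q s) (Q s)) *\<^sub>R a s"
      using aeq[OF s] QQpos[OF s] by simp
    finally have "distribution_parameter c q s = sqrt (linner (Q s) (Q s)) * linner C (a s) / linner (Q s) (Q s)"
      by (simp add: linner_scale)
    then show ?thesis using sqrt_aux[OF QQpos[OF s]] by simp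
  qed
  have "sqrt (linner (Q s) (Q s)) > 0" using QQpos[OF s] by simp
  then have "distribution_parameter c q s = 0 \<longleftrightarrow> linner C (a s) = 0"
    unfolding dp by simp
  moreover have "\<epsilon> \<noteq> 0" using e1 by auto
  ultimately show ?thesis using key by simp
qed

theorem theorem4p1:
  fixes I :: "real set" and c q qs :: "real \<Rightarrow> real^3" and R :: "real \<Rightarrow> real"
  assumes "open I" and "connected I"
    and "base_ruled_surface I c q"
    and "type_M1_minus I q \<or> type_M1_plus I q"
    and "\<forall>s\<in>I. R differentiable (at s)"
    and "mannheim_offset I c q R qs"
  shows "developable I c q \<longleftrightarrow> (\<exists>k. \<forall>s\<in>I. R s = k)"
proof -
  note A = assms
  have sr: "striction_ruled I c q" and br: "\<forall>t\<in>I. (\<lambda>t. dds q t) differentiable (at t)"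
    using A(3) unfolding base_ruled_surface_def by auto
  obtain \<epsilon> where e1: "\<epsilon> \<in> {1, -1}" and eps: "\<forall>t\<in>I. linner (q t) (q t) = \<epsilon>"
    using sr unfolding striction_ruled_def by blast
  have sp: "\<forall>t\<in>I. spacelike (central_normal q t)"
    using A(4) unfolding type_M1_minus_def type_M1_plus_def by auto
  have Rd: "(R has_real_derivative deriv R s) (at s)" if "s \<in> I" for s
    using A(5) that by (simp add: DERIV_deriv_iff_real_differentiable)
  have pw: "distribution_parameter c q s = 0 \<longleftrightarrow> deriv R s = 0" if "s \<in> I" for s
    by (rule pointwise[OF A(1) that eps e1 sr br sp Rd[OF that] A(6)])
  have "developable I c q \<longleftrightarrow> (\<forall>s\<in>I. deriv R s = 0)"
    unfolding developable_def using pw by auto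
  also have "\<dots> \<longleftrightarrow> (\<exists>k. \<forall>s\<in>I. R s = k)"
  proof
    assume h: "\<forall>s\<in>I. deriv R s = 0"
    have "R constant_on I"
      by (rule has_field_derivative_0_imp_constant_on[OF _ A(2) A(1)]) (use Rd h in force)
    then show "\<exists>k. \<forall>s\<in>I. R s = k" unfolding constant_on_def by blast
  next
    assume "\<exists>k. \<forall>s\<in>I. R s = k"
    then obtain k where k: "\<forall>s\<in>I. R s = k" by blast
    show "\<forall>s\<in>I. deriv R s = 0"
    proof
      fix s assume s: "s \<in> I"
      show "deriv R s = 0"
        by (rule const_deriv0[OF A(1) s, of R k]) (use k Rd[OF s] in \<open>auto simp: has_real_derivative_iff_has_vector_derivative\<close>)
    qed
  qed
  finally show ?thesis .
qed

end
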